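(* Let $\Omega=\{(x,y,z)\in\mathbb{R}^3: z<xy^2\}$. Then $\Omega$ is a $C^\infty$ domain, but $\Omega$ has no uniformly $C^2$ defining function.
   Context: A $C^m$ defining function for an open set $\Omega\subset\mathbb{R}^n$ is a real-valued $C^m$ function $\rho$ on an open neighborhood $U$ of $\partial\Omega$ with $\{x\in U:\rho<0\}=\Omega\cap U$ and $\nabla\rho\neq0$ on $\partial\Omega$; $\Omega$ is a $C^\infty$ domain if it has a $C^\infty$ defining function. A defining function is uniformly $C^m$ if $\operatorname{dist}(\partial\Omega,\partial U)>0$, $\sup_{U}\sum_{|\alpha|\le m}|\partial^\alpha\rho|<\infty$, and $\inf_U|\nabla\rho|>0$. *)

theory Defs
  imports "HOL-Analysis.Analysis"
begin

definition pd :: "(real^'n \<Rightarrow> real) \<Rightarrow> 'n \<Rightarrow> real^'n \<Rightarrow> real" where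
  "pd f i x = deriv (\<lambda>t. f (x + t *\<^sub>R axis i 1)) 0"

definition grad :: "(real^'n \<Rightarrow> real) \<Rightarrow> real^'n \<Rightarrow> real^'n" where
  "grad f x = (\<chi> i. pd f i x)"

fun iter_pd :: "(real^'n \<Rightarrow> real) \<Rightarrow> 'n list \<Rightarrow> real^'n \<Rightarrow> real" where
  "iter_pd f [] = f"
| "iter_pd f (i # is) = pd (iter_pd f is) i"

primrec Ck :: "nat \<Rightarrow> (real^'n) set \<Rightarrow> (real^'n \<Rightarrow> real) \<Rightarrow> bool" where
  "Ck 0 U f \<longleftrightarrow> continuous_on U f"
| "Ck (Suc m) U f \<longleftrightarrow> continuous_on U f \<and>
     (\<forall>i. \<forall>x\<in>U. (\<lambda>t. f (x + t *\<^sub>R axis i 1)) differentiable (at 0)) \<and>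
     (\<forall>i. Ck m U (pd f i))"

definition defining_function ::
  "nat \<Rightarrow> (real^'n) set \<Rightarrow> (real^'n) set \<Rightarrow> (real^'n \<Rightarrow> real) \<Rightarrow> bool" where
  "defining_function m \<Omega> U \<rho> \<longleftrightarrow>
     open U \<and> frontier \<Omega> \<subseteq> U \<and> Ck m U \<rho> \<and>
     {x\<in>U. \<rho> x < 0} = \<Omega> \<inter> U \<and> (\<forall>x\<in>frontier \<Omega>. grad \<rho> x \<noteq> 0)"

definition C_infinity_domain :: "(real^'n) set \<Rightarrow> bool" where
  "C_infinity_domain \<Omega> \<longleftrightarrow> (\<exists>U \<rho>. \<forall>m. defining_function m \<Omega> U \<rho>)"

text \<open>Uniformly C^m defining function. dist(boundary Omega, boundary U) > 0 is stated as a
  positive uniform lower bound on distances (vacuous, i.e. infinite distance, if a boundary is empty).\<close>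
definition uniform_defining_function ::
  "nat \<Rightarrow> (real^'n) set \<Rightarrow> (real^'n) set \<Rightarrow> (real^'n \<Rightarrow> real) \<Rightarrow> bool" where
  "uniform_defining_function m \<Omega> U \<rho> \<longleftrightarrow>
     defining_function m \<Omega> U \<rho> \<and>
     (\<exists>\<delta>>0. \<forall>x\<in>frontier \<Omega>. \<forall>y\<in>frontier U. \<delta> \<le> dist x y) \<and>
     (\<exists>B. \<forall>x\<in>U. \<forall>is. length is \<le> m \<longrightarrow> \<bar>iter_pd \<rho> is x\<bar> \<le> B) \<and>
     (\<exists>c>0. \<forall>x\<in>U. c \<le> norm (grad \<rho> x))"

end

theory Submission
  imports Defs
begin

lemma line_deriv:
  fixes f :: "real^'n \<Rightarrow> real"
  assumes "(\<lambda>v. f ((a + u *\<^sub>R axis j 1) + v *\<^sub>R axis j 1)) differentiable (at 0)"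
  shows "((\<lambda>t. f (a + t *\<^sub>R axis j 1)) has_real_derivative pd f j (a + u *\<^sub>R axis j 1)) (at u)"
proof -
  define h where "h = (\<lambda>v. f ((a + u *\<^sub>R axis j 1) + v *\<^sub>R axis j 1))"
  have "(h has_real_derivative deriv h 0) (at 0)"
    using assms DERIV_deriv_iff_real_differentiable h_def by blast
  hence "(h has_real_derivative pd f j (a + u *\<^sub>R axis j 1)) (at (u + (-u)))"
    by (simp add: pd_def h_def)
  hence "((\<lambda>x. h (x + (-u))) has_real_derivative pd f j (a + u *\<^sub>R axis j 1)) (at u)"
    using DERIV_shift by blast
  moreover have "(\<lambda>x. h (x + (-u))) = (\<lambda>t. f (a + t *\<^sub>R axis j 1))"
    by (rule ext) (simp add: h_def algebra_simps)
  ultimately show ?thesis by simp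
qed

lemma line_mvt:
  fixes f :: "real^'n \<Rightarrow> real"
  assumes "0 < T"
    and "\<And>u. 0 \<le> u \<Longrightarrow> u \<le> T \<Longrightarrow> (\<lambda>v. f ((a + u *\<^sub>R axis j 1) + v *\<^sub>R axis j 1)) differentiable (at 0)"
  shows "\<exists>\<tau>. 0 < \<tau> \<and> \<tau> < T \<and> f (a + T *\<^sub>R axis j 1) - f a = T * pd f j (a + \<tau> *\<^sub>R axis j 1)"
proof -
  have D: "\<And>x. 0 \<le> x \<Longrightarrow> x \<le> T \<Longrightarrow> ((\<lambda>t. f (a + t *\<^sub>R axis j 1)) has_real_derivative pd f j (a + x *\<^sub>R axis j 1)) (at x)"
    by (rule line_deriv, rule assms(2))
  have "\<exists>z. 0 < z \<and> z < T \<and> f (a + T *\<^sub>R axis j 1) - f (a + 0 *\<^sub>R axis j 1) = (T - 0) * pd f j (a + z *\<^sub>R axis j 1)"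
    by (rule MVT2[where f="\<lambda>t. f (a + t *\<^sub>R axis j 1)", OF assms(1) D])
  thus ?thesis by simp
qed

lemma line_bound:
  fixes f :: "real^'n \<Rightarrow> real"
  assumes "\<And>u. \<bar>u\<bar> \<le> \<bar>T\<bar> \<Longrightarrow> (\<lambda>v. f ((a + u *\<^sub>R axis j 1) + v *\<^sub>R axis j 1)) differentiable (at 0)"
    and "\<And>u. \<bar>u\<bar> \<le> \<bar>T\<bar> \<Longrightarrow> \<bar>pd f j (a + u *\<^sub>R axis j 1)\<bar> \<le> M"
  shows "\<bar>f (a + T *\<^sub>R axis j 1) - f a\<bar> \<le> M * \<bar>T\<bar>"
proof (cases "T = 0")
  case True
  have "0 \<le> M" using assms(2)[of 0] True by auto
  then show ?thesis using True by simp
next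
  case False
  have D: "\<And>x. T \<le> x \<Longrightarrow> x \<le> 0 \<Longrightarrow> ((\<lambda>t. f (a + t *\<^sub>R axis j 1)) has_real_derivative pd f j (a + x *\<^sub>R axis j 1)) (at x)"
      "\<And>x. 0 \<le> x \<Longrightarrow> x \<le> T \<Longrightarrow> ((\<lambda>t. f (a + t *\<^sub>R axis j 1)) has_real_derivative pd f j (a + x *\<^sub>R axis j 1)) (at x)"
    by (rule line_deriv, rule assms(1), simp)+
  show ?thesis
  proof (cases "T > 0")
    case True
    obtain z where z: "0 < z" "z < T" "f (a + T *\<^sub>R axis j 1) - f (a + 0 *\<^sub>R axis j 1) = (T - 0) * pd f j (a + z *\<^sub>R axis j 1)"
      using MVT2[where f="\<lambda>t. f (a + t *\<^sub>R axis j 1)", OF True D(2)] by blast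
    have "\<bar>pd f j (a + z *\<^sub>R axis j 1)\<bar> \<le> M" using assms(2) z by auto
    then show ?thesis using z True by (simp add: abs_mult mult.commute)
  next
    case False2: False
    hence "T < 0" using False by simp
    obtain z where z: "T < z" "z < 0" "f (a + 0 *\<^sub>R axis j 1) - f (a + T *\<^sub>R axis j 1) = (0 - T) * pd f j (a + z *\<^sub>R axis j 1)"
      using MVT2[where f="\<lambda>t. f (a + t *\<^sub>R axis j 1)", OF \<open>T < 0\<close> D(1)] by blast
    have "\<bar>pd f j (a + z *\<^sub>R axis j 1)\<bar> \<le> M" using assms(2) z by auto
    then show ?thesis using z \<open>T < 0\<close> by (simp add: abs_mult mult.commute abs_minus_commute)
  qed
qed



inductive poly3 :: "(real^'n \<Rightarrow> real) \<Rightarrow> bool" where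
  pconst: "poly3 (\<lambda>x. c)"
| pcoord: "poly3 (\<lambda>x. x $ k)"
| padd: "poly3 f \<Longrightarrow> poly3 g \<Longrightarrow> poly3 (\<lambda>x. f x + g x)"
| pmult: "poly3 f \<Longrightarrow> poly3 g \<Longrightarrow> poly3 (\<lambda>x. f x * g x)"

lemma poly3_props:
  "poly3 f \<Longrightarrow> continuous_on UNIV f \<and>
     (\<forall>i x. ((\<lambda>t. f (x + t *\<^sub>R axis i 1)) has_real_derivative pd f i x) (at 0)) \<and>
     (\<forall>i. poly3 (pd f i))"
proof (induction rule: poly3.induct)
  case (pconst c)
  have e: "pd (\<lambda>x. c) i = (\<lambda>x. 0)" for i by (rule ext) (simp add: pd_def)
  show ?case by (simp add: e poly3.pconst)
next
  case (pcoord k)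
  have d: "((\<lambda>t. (x + t *\<^sub>R axis i 1) $ k) has_real_derivative (axis i 1 $ k)) (at 0)" for i x
    by (auto intro!: derivative_eq_intros)
  have "pd (\<lambda>x. x $ k) i x = axis i 1 $ k" for i x
    unfolding pd_def by (rule DERIV_imp_deriv[OF d])
  then show ?case using d by (auto intro: poly3.pconst continuous_intros)
next
  case (padd f g)
  have d: "((\<lambda>t. f (x + t *\<^sub>R axis i 1) + g (x + t *\<^sub>R axis i 1)) has_real_derivative (pd f i x + pd g i x)) (at 0)" for i x
    using padd.IH by (auto intro!: DERIV_add)
  have e: "pd (\<lambda>x. f x + g x) i = (\<lambda>x. pd f i x + pd g i x)" for i
    unfolding pd_def[of "\<lambda>x. f x + g x"] using DERIV_imp_deriv[OF d] by (auto simp: pd_def)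
  show ?case using d e padd.IH by (auto intro: poly3.padd continuous_intros)
next
  case (pmult f g)
  have d: "((\<lambda>t. f (x + t *\<^sub>R axis i 1) * g (x + t *\<^sub>R axis i 1)) has_real_derivative (pd f i x * g x + f x * pd g i x)) (at 0)" for i x
  proof -
    have a: "((\<lambda>t. f (x + t *\<^sub>R axis i 1)) has_real_derivative pd f i x) (at 0)"
      and b: "((\<lambda>t. g (x + t *\<^sub>R axis i 1)) has_real_derivative pd g i x) (at 0)" using pmult.IH by auto
    show ?thesis using DERIV_mult[OF a b] by (simp add: mult.commute)
  qed
  have e: "pd (\<lambda>x. f x * g x) i = (\<lambda>x. pd f i x * g x + f x * pd g i x)" for i
    unfolding pd_def[of "\<lambda>x. f x * g x"] using DERIV_imp_deriv[OF d] by (auto simp: pd_def)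
  show ?case using d e pmult.IH pmult.hyps by (auto intro!: poly3.padd poly3.pmult continuous_intros)
qed

lemma poly3_Ck: "poly3 f \<Longrightarrow> Ck m UNIV f"
proof (induction m arbitrary: f)
  case 0 then show ?case using poly3_props by auto
next
  case (Suc m)
  show ?case using poly3_props[OF Suc.prems] Suc.IH by (auto simp: real_differentiable_def)
qed


lemma part1:
  fixes \<Omega> :: "(real^3) set"
  assumes "\<Omega> = {p. p$3 < p$1 * (p$2)^2}"
  shows "C_infinity_domain \<Omega>"
proof -
  define \<rho> :: "real^3 \<Rightarrow> real" where "\<rho> = (\<lambda>p. p$3 + (-1) * (p$1 * (p$2 * p$2)))"
  have P: "poly3 \<rho>" unfolding \<rho>_def by (intro poly3.intros)
  have g: "grad \<rho> x \<noteq> 0" for x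
  proof -
    have d: "((\<lambda>t. \<rho> (x + t *\<^sub>R axis 3 1)) has_real_derivative 1) (at 0)"
    proof -
      have "(\<lambda>t. \<rho> (x + t *\<^sub>R axis 3 1)) = (\<lambda>t. t + (x$3 - x$1 * (x$2 * x$2)))"
        by (rule ext) (simp add: \<rho>_def axis_def)
      moreover have "((\<lambda>t. t + (x$3 - x$1 * (x$2 * x$2))) has_real_derivative 1) (at 0)"
        by (auto intro!: derivative_eq_intros)
      ultimately show ?thesis by simp
    qed
    have "grad \<rho> x $ 3 = 1" unfolding grad_def pd_def using DERIV_imp_deriv[OF d] by simp
    thus ?thesis by auto
  qed
  have "defining_function m \<Omega> UNIV \<rho>" for m
    unfolding defining_function_def using poly3_Ck[OF P] g assms
    by (auto simp: \<rho>_def power2_eq_square)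
  thus ?thesis unfolding C_infinity_domain_def by blast
qed


lemma part2:
  fixes \<Omega> :: "(real^3) set"
  assumes \<Omega>: "\<Omega> = {p. p$3 < p$1 * (p$2)^2}"
    and uf: "uniform_defining_function 2 \<Omega> U \<rho>"
  shows False
proof -
  have openO: "open \<Omega>" unfolding \<Omega> by (intro open_Collect_less continuous_intros)
  have graph: "q \<in> frontier \<Omega>" if q: "q$3 = q$1 * (q$2)^2" for q
  proof -
    have "q \<notin> \<Omega>" using q \<Omega> by auto
    moreover have "q \<in> closure \<Omega>"
      unfolding closure_approachable
    proof (intro allI impI)
      fix e :: real assume e: "0 < e"
      define y where "y = q - (e/2) *\<^sub>R axis 3 1"
      have "y \<in> \<Omega>" using q e by (simp add: \<Omega> y_def axis_def)
      moreover have "dist y q < e" using e by (simp add: y_def dist_norm)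
      ultimately show "\<exists>y\<in>\<Omega>. dist y q < e" by blast
    qed
    ultimately show ?thesis by (simp add: frontier_def interior_open[OF openO])
  qed
  from uf obtain \<delta> B c where
      oU: "open U" and fU: "frontier \<Omega> \<subseteq> U" and Ck2: "Ck 2 U \<rho>"
      and setEq: "{x\<in>U. \<rho> x < 0} = \<Omega> \<inter> U" and d0: "\<delta> > 0"
      and dd: "\<forall>x\<in>frontier \<Omega>. \<forall>y\<in>frontier U. \<delta> \<le> dist x y"
      and Bb: "\<forall>x\<in>U. \<forall>is. length is \<le> 2 \<longrightarrow> \<bar>iter_pd \<rho> is x\<bar> \<le> B"
      and c0: "c > 0" and cg: "\<forall>x\<in>U. c \<le> norm (grad \<rho> x)"
    unfolding uniform_defining_function_def defining_function_def by blast
  have ball: "ball q \<delta> \<subseteq> U" if "q \<in> frontier \<Omega>" for q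
  proof (rule ccontr)
    assume "\<not> ball q \<delta> \<subseteq> U"
    hence "ball q \<delta> - U \<noteq> {}" by blast
    moreover have "q \<in> ball q \<delta> \<inter> U" using that fU d0 by auto
    hence "ball q \<delta> \<inter> U \<noteq> {}" by blast
    ultimately have "ball q \<delta> \<inter> frontier U \<noteq> {}"
      using connected_Int_frontier[of "ball q \<delta>" U] by auto
    then obtain z where "z \<in> ball q \<delta>" "z \<in> frontier U" by blast
    thus False using dd that by (auto simp: dist_commute) (meson linorder_not_le)
  qed
  have Ck2': "continuous_on U \<rho>"
    "\<And>i x. x \<in> U \<Longrightarrow> (\<lambda>t. \<rho> (x + t *\<^sub>R axis i 1)) differentiable (at 0)"
    "\<And>i k x. x \<in> U \<Longrightarrow> (\<lambda>t. pd \<rho> k (x + t *\<^sub>R axis i 1)) differentiable (at 0)"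
    using Ck2 by (auto simp: numeral_2_eq_2)
  have zero: "\<rho> q = 0" if q: "q$3 = q$1 * (q$2)^2" for q
  proof -
    have qU: "q \<in> U" using graph[OF q] fU by auto
    have "\<not> \<rho> q < 0"
    proof
      assume "\<rho> q < 0"
      hence "q \<in> {x\<in>U. \<rho> x < 0}" using qU by simp
      hence "q \<in> \<Omega>" using setEq by blast
      thus False using q \<Omega> by simp
    qed
    moreover have "\<not> \<rho> q > 0"
    proof
      assume pos: "\<rho> q > 0"
      have "continuous (at q) \<rho>" using Ck2'(1) oU qU continuous_on_eq_continuous_at by blast
      then obtain d where d: "d > 0" "\<And>x'. dist x' q < d \<Longrightarrow> dist (\<rho> x') (\<rho> q) < \<rho> q"
        using pos unfolding continuous_at_eps_delta by blast
      define y where "y = q - (min d \<delta> / 2) *\<^sub>R axis 3 1"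
      have dy: "dist y q < d" "dist q y < \<delta>" using d d0 by (auto simp: y_def dist_norm)
      have "y \<in> U" using ball[OF graph[OF q]] dy by auto
      moreover have "y \<in> \<Omega>" using q d d0 by (simp add: \<Omega> y_def axis_def)
      ultimately have "\<rho> y < 0" using setEq by auto
      thus False using d(2)[OF dy(1)] pos by (auto simp: dist_real_def)
    qed
    ultimately show ?thesis by simp
  qed
  have B0: "0 \<le> B"
  proof -
    have "vec 0 \<in> frontier \<Omega>" by (rule graph) simp
    hence "vec 0 \<in> U" using fU by auto
    hence "\<bar>iter_pd \<rho> [] (vec 0)\<bar> \<le> B" using Bb by (metis list.size(3) zero_le)
    thus ?thesis by (meson abs_ge_zero order_trans)
  qed

  define X where "X = 2 * B / c + 1"
  have X1: "X \<ge> 1" using B0 c0 by (simp add: X_def)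
  have Xc: "X * c = 2 * B + c" using c0 by (simp add: X_def field_simps)
  define r where "r = min (\<delta>/2) (c / (2 * (B + 1)))"
  have r0: "r > 0" using d0 c0 B0 by (simp add: r_def)
  have rd: "r < \<delta>" using d0 by (simp add: r_def)
  have Br: "B * r \<le> c / 2"
  proof -
    have "B * r \<le> B * (c / (2 * (B + 1)))" using B0 by (intro mult_left_mono) (auto simp: r_def)
    also have "\<dots> \<le> c / 2" using B0 c0 by (simp add: field_simps)
    finally show ?thesis .
  qed
  define s where "s = min 1 (r / (2 * (X + 1)))"
  define \<eta> where "\<eta> = X * s^2"
  have s0: "s > 0" using r0 X1 by (simp add: s_def)
  have s1: "s \<le> 1" by (simp add: s_def)
  have sr: "s \<le> r / (2 * (X + 1))" by (simp add: s_def)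
  have eta0: "\<eta> > 0" using s0 X1 by (simp add: \<eta>_def)
  have ser: "s + \<eta> \<le> r"
  proof -
    have "r / (2 * (X + 1)) \<le> r / 2" using r0 X1 by (simp add: field_simps)
    hence a: "s \<le> r / 2" using sr by linarith
    have "\<eta> \<le> X * s" unfolding \<eta>_def power2_eq_square using s0 s1 X1
      by (simp add: mult_left_le)
    also have "\<dots> \<le> X * (r / (2 * (X + 1)))" using sr X1 by (intro mult_left_mono) auto
    also have "\<dots> \<le> r / 2" using r0 X1 by (simp add: field_simps)
    finally show ?thesis using a by linarith
  qed
  have Bse: "B * (s + \<eta>) \<le> c / 2"
    using mult_left_mono[OF ser B0] Br by linarith
  define p :: "real^3" where "p = (\<chi> i. if i = 1 then X else 0)"
  define P where "P = (\<lambda>u t. p + u *\<^sub>R axis 2 1 + t *\<^sub>R axis 3 1)"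
  have Pc: "P u t $ 1 = X" "P u t $ 2 = u" "P u t $ 3 = t" for u t
    by (simp_all add: P_def p_def axis_def)
  have pP: "p = P 0 0" by (simp add: P_def)
  have pF: "p \<in> frontier \<Omega>" by (rule graph) (simp add: p_def)
  have inU: "P u t \<in> U" if "\<bar>u\<bar> \<le> s" "\<bar>t\<bar> \<le> \<eta>" for u t
  proof -
    have "dist p (P u t) = norm (u *\<^sub>R axis 2 1 + t *\<^sub>R axis 3 1 :: real^3)"
      by (simp add: P_def dist_norm norm_minus_commute add.commute)
    also have "\<dots> \<le> \<bar>u\<bar> + \<bar>t\<bar>" by (rule order_trans[OF norm_triangle_ineq]) simp
    also have "\<dots> < \<delta>" using that ser rd by linarith
    finally show ?thesis using ball[OF pF] by auto
  qed
  have pU: "p \<in> U" using inU[of 0 0] s0 eta0 pP by simp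

  have U2: "p + u *\<^sub>R axis 2 1 \<in> U" if "\<bar>u\<bar> \<le> s" for u
    using inU[OF that, of 0] eta0 by (simp add: P_def)
  have U3: "p + s *\<^sub>R axis 2 1 + t *\<^sub>R axis 3 1 \<in> U" if "\<bar>t\<bar> \<le> \<eta>" for t
    using inU[OF _ that, of s] s0 by (simp add: P_def)
  have BB: "\<bar>pd (pd \<rho> k) j x\<bar> \<le> B" if "x \<in> U" for j k x
  proof -
    have "\<bar>iter_pd \<rho> [j, k] x\<bar> \<le> B" using Bb that by (simp del: iter_pd.simps)
    thus ?thesis by simp
  qed
  have pd1: "pd \<rho> 1 p = 0"
  proof -
    have "(\<lambda>t. \<rho> (p + t *\<^sub>R axis 1 1)) = (\<lambda>t. 0)"
      by (rule ext, rule zero) (simp add: p_def axis_def)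
    thus ?thesis by (simp add: pd_def)
  qed
  have pd2: "pd \<rho> 2 p = 0"
  proof (rule DERIV_local_max)
    show "((\<lambda>t. \<rho> (p + t *\<^sub>R axis 2 1)) has_real_derivative pd \<rho> 2 p) (at 0)"
      using line_deriv[of \<rho> p 0 2] Ck2'(2)[OF pU] by simp
    show "0 < s" by (rule s0)
    show "\<forall>y. \<bar>0 - y\<bar> < s \<longrightarrow> \<rho> (p + y *\<^sub>R axis 2 1) \<le> \<rho> (p + 0 *\<^sub>R axis 2 1)"
    proof (intro allI impI)
      fix y :: real assume y: "\<bar>0 - y\<bar> < s"
      have z: "\<rho> p = 0" by (rule zero) (simp add: p_def)
      show "\<rho> (p + y *\<^sub>R axis 2 1) \<le> \<rho> (p + 0 *\<^sub>R axis 2 1)"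
      proof (cases "y = 0")
        case True then show ?thesis by simp
      next
        case False
        have "p + y *\<^sub>R axis 2 1 \<in> \<Omega>" using False X1
          by (simp add: \<Omega> p_def axis_def)
        moreover have "p + y *\<^sub>R axis 2 1 \<in> U" using U2[of y] y by simp
        ultimately have "\<rho> (p + y *\<^sub>R axis 2 1) < 0" using setEq by blast
        thus ?thesis using z by simp
      qed
    qed
  qed
  have pd3: "c \<le> \<bar>pd \<rho> 3 p\<bar>"
  proof -
    have "c \<le> norm (grad \<rho> p)" using cg pU by blast
    also have "\<dots> \<le> (\<Sum>i\<in>UNIV. \<bar>grad \<rho> p $ i\<bar>)" by (rule norm_le_l1_cart)
    also have "\<dots> = \<bar>pd \<rho> 3 p\<bar>" by (simp add: sum_3 grad_def pd1 pd2)
    finally show ?thesis .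
  qed
  have A1: "\<bar>pd \<rho> 2 (p + u *\<^sub>R axis 2 1)\<bar> \<le> B * s" if u: "\<bar>u\<bar> \<le> s" for u
  proof -
    have "\<bar>pd \<rho> 2 (p + u *\<^sub>R axis 2 1) - pd \<rho> 2 p\<bar> \<le> B * \<bar>u\<bar>"
      by (rule line_bound) (use u U2 Ck2'(3) BB in auto)
    thus ?thesis using pd2 u B0 mult_left_mono[OF u B0] by simp
  qed
  have A2: "\<bar>\<rho> (p + s *\<^sub>R axis 2 1)\<bar> \<le> (B * s) * s"
  proof -
    have "\<bar>\<rho> (p + s *\<^sub>R axis 2 1) - \<rho> p\<bar> \<le> (B * s) * \<bar>s\<bar>"
      by (rule line_bound) (use s0 U2 Ck2'(2) A1 in auto)
    moreover have "\<rho> p = 0" by (rule zero) (simp add: p_def)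
    ultimately show ?thesis using s0 by simp
  qed
  have B1: "\<bar>pd \<rho> 3 (p + s *\<^sub>R axis 2 1) - pd \<rho> 3 p\<bar> \<le> B * \<bar>s\<bar>"
    by (rule line_bound) (use s0 U2 Ck2'(3) BB in auto)
  have B2: "\<bar>pd \<rho> 3 (p + s *\<^sub>R axis 2 1 + t *\<^sub>R axis 3 1) - pd \<rho> 3 (p + s *\<^sub>R axis 2 1)\<bar> \<le> B * \<bar>t\<bar>"
    if t: "\<bar>t\<bar> \<le> \<eta>" for t
    by (rule line_bound) (use t U3 Ck2'(3) BB in auto)
  have B3: "c / 2 \<le> \<bar>pd \<rho> 3 (p + s *\<^sub>R axis 2 1 + t *\<^sub>R axis 3 1)\<bar>" if t: "\<bar>t\<bar> \<le> \<eta>" for t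
  proof -
    have "B * \<bar>t\<bar> \<le> B * \<eta>" using mult_left_mono[OF t B0] .
    thus ?thesis using B1 B2[OF t] pd3 Bse s0 by (simp add: algebra_simps)
  qed
  obtain \<tau> where tau: "0 < \<tau>" "\<tau> < \<eta>"
    "\<rho> (p + s *\<^sub>R axis 2 1 + \<eta> *\<^sub>R axis 3 1) - \<rho> (p + s *\<^sub>R axis 2 1) = \<eta> * pd \<rho> 3 (p + s *\<^sub>R axis 2 1 + \<tau> *\<^sub>R axis 3 1)"
    using line_mvt[of \<eta> \<rho> "p + s *\<^sub>R axis 2 1" 3] eta0 U3 Ck2'(2) by auto
  have "\<rho> (p + s *\<^sub>R axis 2 1 + \<eta> *\<^sub>R axis 3 1) = 0"
    by (rule zero) (simp add: p_def axis_def \<eta>_def)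
  hence "\<bar>\<rho> (p + s *\<^sub>R axis 2 1)\<bar> = \<eta> * \<bar>pd \<rho> 3 (p + s *\<^sub>R axis 2 1 + \<tau> *\<^sub>R axis 3 1)\<bar>"
  proof -
    assume h: "\<rho> (p + s *\<^sub>R axis 2 1 + \<eta> *\<^sub>R axis 3 1) = 0"
    have "\<rho> (p + s *\<^sub>R axis 2 1) = - (\<eta> * pd \<rho> 3 (p + s *\<^sub>R axis 2 1 + \<tau> *\<^sub>R axis 3 1))"
      using tau(3) h by linarith
    thus ?thesis using eta0 by (simp add: abs_mult)
  qed
  moreover have "\<eta> * (c / 2) \<le> \<eta> * \<bar>pd \<rho> 3 (p + s *\<^sub>R axis 2 1 + \<tau> *\<^sub>R axis 3 1)\<bar>"
    using tau B3[of \<tau>] eta0 by (intro mult_left_mono) auto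
  ultimately have "\<eta> * (c / 2) \<le> \<bar>\<rho> (p + s *\<^sub>R axis 2 1)\<bar>" by simp
  hence "X * s^2 * (c / 2) \<le> B * s * s" using A2 by (simp add: \<eta>_def)
  hence "s^2 * (X * c) \<le> s^2 * (2 * B)" by (simp add: power2_eq_square algebra_simps)
  hence "X * c \<le> 2 * B" using s0 by simp
  thus False using Xc c0 by simp
qed
theorem mainTheorem7:
  fixes \<Omega> :: "(real^3) set"
  assumes "\<Omega> = {p. p$3 < p$1 * (p$2)^2}"
  shows "C_infinity_domain \<Omega> \<and> \<not> (\<exists>U \<rho>. uniform_defining_function 2 \<Omega> U \<rho>)"
  using part1[OF assms] part2[OF assms] by blast

end
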